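(* Let $\overline f:[a,b]\to\mathbb{R}_\mathcal{I}$ be continuous on $[a,b]$. Then $\overline f$ is interval Riemann integrable on $[a,b]$.
   Context: $\mathbb{R}_\mathcal{I}$ denotes the set of all closed intervals $\overline a=[a_l,a_r]$ with $a_l<a_r$ (real numbers are not regarded as degenerate intervals). Each $\overline a$ is written as $\overline a=\langle a_c;a_w\rangle$ with center $a_c=\frac{a_l+a_r}{2}$ and radius $a_w=\frac{a_r-a_l}{2}>0$. The operations on $\mathbb{R}_\mathcal{I}$ are: addition $\overline a+\overline b=\langle a_c+b_c;\,a_w b_w\rangle$ and scalar multiplication $k\overline a=\langle k a_c;\,a_w^{k}\rangle$ for $k\in\mathbb{R}$. The distance is $d(\overline a,\overline b)=\sqrt{(a_c-b_c)^2+(\ln a_w-\ln b_w)^2}$. An interval-valued function $\overline f(t)=\langle f_c(t);f_w(t)\rangle$ on $[a,b]$ is continuous at $x$ if for every $\varepsilon>0$ there is $\delta>0$ with $d(\overline f(x),\overline f(y))<\varepsilon$ whenever $y\in[a,b]$, $|y-x|<\delta$; continuous on $[a,b]$ means continuous at every point. $\overline f$ is interval Riemann integrable on $[a,b]$ with integral $\overline A\in\mathbb{R}_\mathcal{I}$, written $\overline A=(IR)\int_a^b\overline f(t)\,\mathrm{d}t$, if for every $\varepsilon>0$ there is $\delta>0$ such that for every partition $a=t_0<t_1<\dots<t_n=b$ with $t_i-t_{i-1}<\delta$ and every choice of tags $\xi_i\in[t_{i-1},t_i]$, one has $d\big(\sum_{i=1}^n \overline f(\xi_i)(t_i-t_{i-1}),\overline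 A\big)<\varepsilon$, where the sum and scalar products use the operations above. *)

theory Defs
  imports "HOL-Analysis.Analysis"
begin

text \<open>An interval is represented by its center-radius pair (c, w) with w > 0.\<close>
type_synonym ivl = "real \<times> real"

definition RI :: "ivl set" where
  "RI = {p. snd p > 0}"

definition iadd :: "ivl \<Rightarrow> ivl \<Rightarrow> ivl" where
  "iadd a b = (fst a + fst b, snd a * snd b)"

definition iscale :: "real \<Rightarrow> ivl \<Rightarrow> ivl" where
  "iscale k a = (k * fst a, snd a powr k)"

definition idist :: "ivl \<Rightarrow> ivl \<Rightarrow> real" where
  "idist a b = sqrt ((fst a - fst b)^2 + (ln (snd a) - ln (snd b))^2)"

fun isum_from :: "(nat \<Rightarrow> ivl) \<Rightarrow> nat \<Rightarrow> ivl" where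
  "isum_from g 0 = (0, 1)"
| "isum_from g (Suc 0) = g 1"
| "isum_from g (Suc (Suc n)) = iadd (isum_from g (Suc n)) (g (Suc (Suc n)))"

definition icontinuous_at :: "real \<Rightarrow> real \<Rightarrow> (real \<Rightarrow> ivl) \<Rightarrow> real \<Rightarrow> bool" where
  "icontinuous_at a b f x \<longleftrightarrow>
     (\<forall>\<epsilon>>0. \<exists>\<delta>>0. \<forall>y\<in>{a..b}. \<bar>y - x\<bar> < \<delta> \<longrightarrow> idist (f x) (f y) < \<epsilon>)"

definition icontinuous_on :: "real \<Rightarrow> real \<Rightarrow> (real \<Rightarrow> ivl) \<Rightarrow> bool" where
  "icontinuous_on a b f \<longleftrightarrow> (\<forall>x\<in>{a..b}. icontinuous_at a b f x)"

definition fine_tagged_partition ::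
    "real \<Rightarrow> real \<Rightarrow> real \<Rightarrow> nat \<Rightarrow> (nat \<Rightarrow> real) \<Rightarrow> (nat \<Rightarrow> real) \<Rightarrow> bool" where
  "fine_tagged_partition a b \<delta> n t \<xi> \<longleftrightarrow>
     n \<ge> 1 \<and> t 0 = a \<and> t n = b \<and>
     (\<forall>i\<in>{1..n}. t (i - 1) < t i \<and> t i - t (i - 1) < \<delta> \<and> t (i - 1) \<le> \<xi> i \<and> \<xi> i \<le> t i)"

definition iriemann_sum :: "(real \<Rightarrow> ivl) \<Rightarrow> nat \<Rightarrow> (nat \<Rightarrow> real) \<Rightarrow> (nat \<Rightarrow> real) \<Rightarrow> ivl" where
  "iriemann_sum f n t \<xi> = isum_from (\<lambda>i. iscale (t i - t (i - 1)) (f (\<xi> i))) n"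

definition ihas_IR_integral :: "real \<Rightarrow> real \<Rightarrow> (real \<Rightarrow> ivl) \<Rightarrow> ivl \<Rightarrow> bool" where
  "ihas_IR_integral a b f A \<longleftrightarrow> A \<in> RI \<and>
     (\<forall>\<epsilon>>0. \<exists>\<delta>>0. \<forall>n t \<xi>. fine_tagged_partition a b \<delta> n t \<xi> \<longrightarrow>
        idist (iriemann_sum f n t \<xi>) A < \<epsilon>)"

definition iIR_integrable :: "real \<Rightarrow> real \<Rightarrow> (real \<Rightarrow> ivl) \<Rightarrow> bool" where
  "iIR_integrable a b f \<longleftrightarrow> (\<exists>A. ihas_IR_integral a b f A)"

end

theory Submission
  imports Defs
begin

lemma piece:
  fixes h :: "real \<Rightarrow> real"
  assumes "c \<le> d" "continuous_on {c..d} h" "\<forall>s\<in>{c..d}. \<bar>h x - h s\<bar> \<le> e" "0 \<le> e"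
  shows "\<bar>(d - c) * h x - integral {c..d} h\<bar> \<le> (d - c) * e"
proof -
  have int: "h integrable_on {c..d}" using assms(2) by (rule integrable_continuous_real)
  have hi: "((\<lambda>s. h x - h s) has_integral ((d - c) * h x - integral {c..d} h)) {c..d}"
    using has_integral_diff[OF has_integral_const_real[of "h x" c d] integrable_integral[OF int]]
      assms(1) by (simp add: content_real)
  have "norm ((d - c) * h x - integral {c..d} h) \<le> e * Henstock_Kurzweil_Integration.content {c..d}"
    using assms by (intro has_integral_bound_real[OF _ _ hi, where S="{}"]) auto
  then show ?thesis using assms(1) by (simp add: content_real mult.commute)
qed

lemma telesc: fixes t :: "nat \<Rightarrow> real" and n :: nat shows "(\<Sum>i=1..n. (t i - t (i - 1))) = t n - t 0"
  by (induction n) (auto simp: sum.cl_ivl_Suc)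

lemma ftp_range:
  assumes fp: "fine_tagged_partition a b \<delta> n t \<xi>"
  shows "i \<le> n \<Longrightarrow> a \<le> t i \<and> t i \<le> b"
    and "i \<in> {1..n} \<Longrightarrow> \<xi> i \<in> {a..b}"
proof -
  have step: "\<And>i. i \<in> {1..n} \<Longrightarrow> t (i - 1) < t i \<and> t i - t (i - 1) < \<delta> \<and> t (i - 1) \<le> \<xi> i \<and> \<xi> i \<le> t i"
    using fp unfolding fine_tagged_partition_def by blast
  have t0: "t 0 = a" and tn: "t n = b" using fp unfolding fine_tagged_partition_def by auto
  have mono: "i \<le> j \<Longrightarrow> j \<le> n \<Longrightarrow> t i \<le> t j" for i j
  proof (induction j)
    case 0 then show ?case by simp
  next
    case (Suc j)
    show ?case
    proof (cases "i = Suc j")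
      case True then show ?thesis by simp
    next
      case False
      then have "t i \<le> t j" using Suc by simp
      moreover have "t j < t (Suc j)" using step[of "Suc j"] Suc.prems by auto
      ultimately show ?thesis by simp
    qed
  qed
  have rng: "i \<le> n \<Longrightarrow> a \<le> t i \<and> t i \<le> b" for i
    using mono[of 0 i] mono[of i n] t0 tn by auto
  then show "i \<le> n \<Longrightarrow> a \<le> t i \<and> t i \<le> b" .
  show "i \<in> {1..n} \<Longrightarrow> \<xi> i \<in> {a..b}"
  proof -
    assume i: "i \<in> {1..n}"
    have "i - 1 \<le> n" "i \<le> n" using i by auto
    then show ?thesis using step[OF i] rng[of i] rng[of "i - 1"] by auto
  qed
qed

lemma abs_le_sqrt: "\<bar>u\<bar> \<le> sqrt (u^2 + v^2)"
  by (rule real_le_rsqrt) (simp add: power2_abs)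

lemma sqrt_le_abs_sum: "sqrt (x^2 + y^2) \<le> \<bar>x\<bar> + \<bar>y\<bar>"
proof (rule real_le_lsqrt)
  show "x^2 + y^2 \<le> (\<bar>x\<bar> + \<bar>y\<bar>)^2"
    by (simp add: power2_eq_square algebra_simps)
qed auto

lemma riemann_approx:
  fixes h :: "real \<Rightarrow> real"
  assumes ab: "a < b" and hc: "continuous_on {a..b} h" and ep: "\<epsilon> > 0"
  shows "\<exists>\<delta>>0. \<forall>n t \<xi>. fine_tagged_partition a b \<delta> n t \<xi> \<longrightarrow>
     \<bar>(\<Sum>i=1..n. (t i - t (i - 1)) * h (\<xi> i)) - integral {a..b} h\<bar> < \<epsilon>"
proof -
  define e where "e = \<epsilon> / (2 * (b - a))"
  have e0: "e > 0" using ab ep by (simp add: e_def)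
  have "uniformly_continuous_on {a..b} h"
    using hc by (rule compact_uniformly_continuous) simp
  then obtain \<delta> where d0: "\<delta> > 0" and dd: "\<forall>x\<in>{a..b}. \<forall>x'\<in>{a..b}. dist x' x < \<delta> \<longrightarrow> dist (h x') (h x) < e"
    unfolding uniformly_continuous_on_def using e0 by metis
  show ?thesis
  proof (intro exI[of _ \<delta>] conjI allI impI d0)
    fix n t \<xi> assume fp: "fine_tagged_partition a b \<delta> n t \<xi>"
    have step: "\<And>i. i \<in> {1..n} \<Longrightarrow> t (i - 1) < t i \<and> t i - t (i - 1) < \<delta> \<and> t (i - 1) \<le> \<xi> i \<and> \<xi> i \<le> t i"
      using fp unfolding fine_tagged_partition_def by blast
    have t0: "t 0 = a" and tn: "t n = b" using fp unfolding fine_tagged_partition_def by auto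
    have mono: "i \<le> j \<Longrightarrow> j \<le> n \<Longrightarrow> t i \<le> t j" for i j
    proof (induction j)
      case 0 then show ?case by simp
    next
      case (Suc j)
      show ?case
      proof (cases "i = Suc j")
        case True then show ?thesis by simp
      next
        case False
        then have "t i \<le> t j" using Suc by simp
        moreover have "t j < t (Suc j)" using step[of "Suc j"] Suc.prems by auto
        ultimately show ?thesis by simp
      qed
    qed
    have rng: "i \<le> n \<Longrightarrow> a \<le> t i \<and> t i \<le> b" for i
      using mono[of 0 i] mono[of i n] t0 tn by auto
    have split: "m \<le> n \<Longrightarrow> integral {a..t m} h = (\<Sum>i=1..m. integral {t (i - 1)..t i} h)" for m
    proof (induction m)
      case 0 then show ?case using t0 by simp
    next
      case (Suc m)
      have c1: "continuous_on {a..t (Suc m)} h"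
        using hc rng[of "Suc m"] Suc.prems by (auto intro: continuous_on_subset)
      have "integral {a..t m} h + integral {t m..t (Suc m)} h = integral {a..t (Suc m)} h"
      proof (rule Henstock_Kurzweil_Integration.integral_combine)
        have "m \<le> n" using Suc.prems by simp
        then show "a \<le> t m" using rng[of m] by simp
        show "t m \<le> t (Suc m)" using mono[of m "Suc m"] Suc.prems by simp
        show "h integrable_on {a..t (Suc m)}" using integrable_continuous_real[OF c1] .
      qed
      then show ?case using Suc by (simp add: sum.cl_ivl_Suc)
    qed
    have pc: "\<bar>(t i - t (i - 1)) * h (\<xi> i) - integral {t (i - 1)..t i} h\<bar> \<le> (t i - t (i - 1)) * e"
      if i: "i \<in> {1..n}" for i
    proof (rule piece)
      have st: "t (i - 1) < t i \<and> t i - t (i - 1) < \<delta> \<and> t (i - 1) \<le> \<xi> i \<and> \<xi> i \<le> t i"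
        using step[OF i] .
      have r1: "a \<le> t (i - 1)" "t i \<le> b" using rng[of "i - 1"] rng[of i] i by auto
      show "t (i - 1) \<le> t i" using st by simp
      show "continuous_on {t (i - 1)..t i} h" using hc r1 by (auto intro: continuous_on_subset)
      show "0 \<le> e" using e0 by simp
      show "\<forall>s\<in>{t (i - 1)..t i}. \<bar>h (\<xi> i) - h s\<bar> \<le> e"
      proof
        fix s assume s: "s \<in> {t (i - 1)..t i}"
        have "dist (h (\<xi> i)) (h s) < e"
          using dd[rule_format, of s "\<xi> i"] s st r1 by (auto simp: dist_real_def)
        then show "\<bar>h (\<xi> i) - h s\<bar> \<le> e" by (simp add: dist_real_def)
      qed
    qed
    have "integral {a..b} h = (\<Sum>i=1..n. integral {t (i - 1)..t i} h)"
      using split[of n] tn by simp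
    then have "\<bar>(\<Sum>i=1..n. (t i - t (i - 1)) * h (\<xi> i)) - integral {a..b} h\<bar>
        = \<bar>\<Sum>i=1..n. ((t i - t (i - 1)) * h (\<xi> i) - integral {t (i - 1)..t i} h)\<bar>"
      by (simp add: sum_subtractf)
    also have "\<dots> \<le> (\<Sum>i=1..n. \<bar>(t i - t (i - 1)) * h (\<xi> i) - integral {t (i - 1)..t i} h\<bar>)"
      by (rule sum_abs)
    also have "\<dots> \<le> (\<Sum>i=1..n. (t i - t (i - 1)) * e)"
      by (rule sum_mono) (rule pc)
    also have "\<dots> = (b - a) * e"
      using telesc[of t n] t0 tn by (simp add: sum_distrib_right[symmetric])
    also have "\<dots> = \<epsilon> / 2" using ab by (simp add: e_def field_simps)
    also have "\<dots> < \<epsilon>" using ep by simp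
    finally show "\<bar>(\<Sum>i=1..n. (t i - t (i - 1)) * h (\<xi> i)) - integral {a..b} h\<bar> < \<epsilon>" .
  qed
qed

lemma isum_from_eq: "isum_from g n = ((\<Sum>i=1..n. fst (g i)), (\<Prod>i=1..n. snd (g i)))"
  by (induction g n rule: isum_from.induct) (auto simp: iadd_def sum.cl_ivl_Suc prod.cl_ivl_Suc)

theorem theorem5p2:
  fixes f :: "real \<Rightarrow> real \<times> real" and a b :: real
  assumes "a < b"
    and "\<forall>t\<in>{a..b}. f t \<in> RI"
    and "icontinuous_on a b f"
  shows "iIR_integrable a b f"
proof -
  define h1 where "h1 = (\<lambda>x. fst (f x))"
  define h2 where "h2 = (\<lambda>x. ln (snd (f x)))"
  have b1: "\<bar>h1 x - h1 y\<bar> \<le> idist (f x) (f y)" for x y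
    unfolding h1_def idist_def by (rule abs_le_sqrt)
  have b2: "\<bar>h2 x - h2 y\<bar> \<le> idist (f x) (f y)" for x y
    unfolding h2_def idist_def by (subst add.commute) (rule abs_le_sqrt)
  have cont: "continuous_on {a..b} h" if hb: "\<And>x y. \<bar>h x - h y\<bar> \<le> idist (f x) (f y)" for h
    unfolding continuous_on_iff
  proof (intro ballI allI impI)
    fix x e assume x: "x \<in> {a..b}" and e: "(0::real) < e"
    obtain d where d: "d > 0" "\<forall>y\<in>{a..b}. \<bar>y - x\<bar> < d \<longrightarrow> idist (f x) (f y) < e"
      using assms(3) x e unfolding icontinuous_on_def icontinuous_at_def by blast
    show "\<exists>d>0. \<forall>x'\<in>{a..b}. dist x' x < d \<longrightarrow> dist (h x') (h x) < e"
      using d hb by (metis dist_real_def abs_minus_commute le_less_trans)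
  qed
  have c1: "continuous_on {a..b} h1" using cont b1 by blast
  have c2: "continuous_on {a..b} h2" using cont b2 by blast
  define A where "A = (integral {a..b} h1, exp (integral {a..b} h2))"
  have "ihas_IR_integral a b f A"
    unfolding ihas_IR_integral_def
  proof (intro conjI allI impI)
    show "A \<in> RI" by (simp add: A_def RI_def)
    fix \<epsilon> :: real assume ep: "\<epsilon> > 0"
    obtain d1 where d1: "d1 > 0" "\<forall>n t \<xi>. fine_tagged_partition a b d1 n t \<xi> \<longrightarrow>
      \<bar>(\<Sum>i=1..n. (t i - t (i - 1)) * h1 (\<xi> i)) - integral {a..b} h1\<bar> < \<epsilon> / 2"
      using riemann_approx[OF assms(1) c1, of "\<epsilon> / 2"] ep by auto
    obtain d2 where d2: "d2 > 0" "\<forall>n t \<xi>. fine_tagged_partition a b d2 n t \<xi> \<longrightarrow>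
      \<bar>(\<Sum>i=1..n. (t i - t (i - 1)) * h2 (\<xi> i)) - integral {a..b} h2\<bar> < \<epsilon> / 2"
      using riemann_approx[OF assms(1) c2, of "\<epsilon> / 2"] ep by auto
    show "\<exists>\<delta>>0. \<forall>n t \<xi>. fine_tagged_partition a b \<delta> n t \<xi> \<longrightarrow>
        idist (iriemann_sum f n t \<xi>) A < \<epsilon>"
    proof (intro exI[of _ "min d1 d2"] conjI allI impI)
      show "min d1 d2 > 0" using d1 d2 by simp
      fix n t \<xi> assume fp: "fine_tagged_partition a b (min d1 d2) n t \<xi>"
      have fp1: "fine_tagged_partition a b d1 n t \<xi>" and fp2: "fine_tagged_partition a b d2 n t \<xi>"
        using fp unfolding fine_tagged_partition_def by auto
      have xr: "\<xi> i \<in> {a..b}" if i: "i \<in> {1..n}" for i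
        using ftp_range(2)[OF fp i] .
      have pos: "snd (f (\<xi> i)) > 0" if "i \<in> {1..n}" for i
        using assms(2) xr[OF that] by (auto simp: RI_def)
      define S1 where "S1 = (\<Sum>i=1..n. (t i - t (i - 1)) * h1 (\<xi> i))"
      define S2 where "S2 = (\<Sum>i=1..n. (t i - t (i - 1)) * h2 (\<xi> i))"
      have fsteq: "fst (iriemann_sum f n t \<xi>) = S1"
        by (simp add: iriemann_sum_def isum_from_eq iscale_def S1_def h1_def)
      have sndeq: "ln (snd (iriemann_sum f n t \<xi>)) = S2"
      proof -
        have "ln (snd (iriemann_sum f n t \<xi>)) = ln (\<Prod>i=1..n. snd (f (\<xi> i)) powr (t i - t (i - 1)))"
          by (simp add: iriemann_sum_def isum_from_eq iscale_def)
        also have "\<dots> = (\<Sum>i=1..n. ln (snd (f (\<xi> i)) powr (t i - t (i - 1))))"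
        proof (rule ln_prod)
          fix i assume "i \<in> {1..n}"
          then show "snd (f (\<xi> i)) powr (t i - t (i - 1)) \<noteq> 0" using pos[of i] by simp
        qed simp
        also have "\<dots> = S2" by (simp add: S2_def h2_def ln_powr)
        finally show ?thesis .
      qed
      have "idist (iriemann_sum f n t \<xi>) A = sqrt ((S1 - integral {a..b} h1)^2 + (S2 - integral {a..b} h2)^2)"
        by (simp add: idist_def A_def fsteq sndeq)
      also have "\<dots> \<le> \<bar>S1 - integral {a..b} h1\<bar> + \<bar>S2 - integral {a..b} h2\<bar>"
        by (rule sqrt_le_abs_sum)
      also have "\<dots> < \<epsilon>" using d1(2) fp1 d2(2) fp2 unfolding S1_def S2_def by fastforce
      finally show "idist (iriemann_sum f n t \<xi>) A < \<epsilon>" .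
    qed
  qed
  then show ?thesis unfolding iIR_integrable_def by blast
qed

end
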